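(* Let $u\in\mathcal{R}_{16}$ be such that $|u|=1$. Then $u=\zeta_{16}^\ell$ for some $0\le\ell\le 15$.
   Context: $\zeta_{16}=e^{2\pi i/16}$ and $\mathcal{R}_{16}$ is the smallest subring of $\mathbb{C}$ containing $1/2$ and $\zeta_{16}$. *)

theory Defs
  imports "HOL-Analysis.Analysis"
begin

definition zeta16 :: complex where
  "zeta16 = cis (2 * pi / 16)"

definition is_subring_C :: "complex set \<Rightarrow> bool" where
  "is_subring_C S \<longleftrightarrow> 1 \<in> S \<and> (\<forall>x\<in>S. \<forall>y\<in>S. x + y \<in> S \<and> x - y \<in> S \<and> x * y \<in> S)"

definition R16 :: "complex set" where
  "R16 = \<Inter> {S. is_subring_C S \<and> 1/2 \<in> S \<and> zeta16 \<in> S}"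

end

theory Submission
  imports Defs
begin

definition al :: real where "al = cos (pi/8)"
definition be :: real where "be = sin (pi/8)"
definition rt :: real where "rt = sqrt 2 / 2"

lemma al_pos: "al > 0" unfolding al_def by (rule cos_gt_zero_pi) (use pi_gt_zero in auto)
lemma be_pos: "be > 0" unfolding be_def by (rule sin_gt_zero) (use pi_gt_zero in auto)
lemma rt_pos: "rt > 0" unfolding rt_def by simp
lemma rt_sq: "rt * rt = 1/2" unfolding rt_def by (simp add: field_simps)
lemma ab_sq: "al * al + be * be = 1" unfolding al_def be_def
  by (metis power2_eq_square sin_cos_squared_add2)
lemma ab_diff: "al * al - be * be = rt"
proof -
  have "cos (2 * (pi/8)) = al * al - be * be" unfolding al_def be_def cos_double by (simp add: power2_eq_square)
  moreover have "2 * (pi/8) = pi/4" by simp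
  ultimately show ?thesis using cos_45 rt_def by simp
qed
lemma ab_prod: "al * be = rt / 2"
proof -
  have "sin (2 * (pi/8)) = 2 * al * be" unfolding al_def be_def sin_double by (simp add: mult.commute)
  moreover have "2 * (pi/8) = pi/4" by simp
  ultimately show ?thesis using sin_45 rt_def by simp
qed
lemma al_sq: "al * al = (1 + rt)/2" using ab_sq ab_diff by simp
lemma be_sq: "be * be = (1 - rt)/2" using ab_sq ab_diff by simp
lemma al_rt: "al * rt = (al + be)/2"
proof -
  have "(2*al*rt)^2 = 4*(al*al)*(rt*rt)" by (simp add: power2_eq_square algebra_simps)
  also have "... = 4*((1+rt)/2)*(1/2)" by (simp only: al_sq rt_sq)
  also have "... = 1 + rt" by simp
  also have "... = (al*al+be*be) + 2*(al*be)" using ab_sq ab_prod by simp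
  also have "... = (al + be)^2" by (simp add: power2_eq_square algebra_simps)
  finally have "(2*al*rt)^2 = (al + be)^2" .
  moreover have "2*al*rt \<ge> 0" "al + be \<ge> 0" using al_pos be_pos rt_pos by auto
  ultimately have "2*al*rt = al + be" using power2_eq_imp_eq by blast
  then show ?thesis by simp
qed
lemma be_rt: "be * rt = (al - be)/2"
proof -
  have "(2*be*rt)^2 = 4*(be*be)*(rt*rt)" by (simp add: power2_eq_square algebra_simps)
  also have "... = 4*((1-rt)/2)*(1/2)" by (simp only: be_sq rt_sq)
  also have "... = 1 - rt" by simp
  also have "... = (al*al+be*be) - 2*(al*be)" using ab_sq ab_prod by simp
  also have "... = (al - be)^2" by (simp add: power2_eq_square algebra_simps)
  finally have "(2*be*rt)^2 = (al - be)^2" .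
  moreover have "2*be*rt \<ge> 0" using be_pos rt_pos by auto
  moreover have "al - be \<ge> 0"
  proof -
    have "(al - be) * (al + be) = rt" using ab_diff by (simp add: algebra_simps)
    then show ?thesis using al_pos be_pos rt_pos
      by (metis add_pos_pos less_eq_real_def mult_less_0_iff not_less)
  qed
  ultimately have "2*be*rt = al - be" using power2_eq_imp_eq by blast
  then show ?thesis by simp
qed

lemma z1: "zeta16 = Complex al be"
  unfolding zeta16_def al_def be_def by (simp add: complex_eq_iff)
lemma z2: "zeta16^2 = Complex rt rt"
  using ab_diff ab_prod by (simp add: z1 power2_eq_square complex_eq_iff algebra_simps)
lemma z3: "zeta16^3 = Complex be al"
proof -
  have "zeta16^3 = zeta16^2 * zeta16" by (simp add: power_Suc2 numeral_3_eq_3 power2_eq_square)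
  also have "... = Complex rt rt * Complex al be" by (metis z1 z2)
  also have "... = Complex be al"
  proof -
    have "rt * al - rt * be = be" "rt * be + rt * al = al" using al_rt be_rt by (simp_all add: algebra_simps)
    then show ?thesis by (simp add: complex_eq_iff)
  qed
  finally show ?thesis .
qed
lemma z4: "zeta16^4 = \<i>"
proof -
  have "zeta16^4 = zeta16^2 * zeta16^2" by (simp flip: power_add)
  then show ?thesis using rt_sq by (simp add: z2 complex_eq_iff)
qed
lemma z5: "zeta16^5 = Complex (-be) al"
proof -
  have "zeta16^5 = zeta16^4 * zeta16" by (simp flip: power_Suc2)
  also have "... = \<i> * Complex al be" by (metis z1 z4)
  finally show ?thesis by (simp add: complex_eq_iff)
qed
lemma z6: "zeta16^6 = Complex (-rt) rt"
proof -
  have "zeta16^6 = zeta16^4 * zeta16^2" by (simp flip: power_add)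
  also have "... = \<i> * Complex rt rt" by (metis z2 z4)
  finally show ?thesis by (simp add: complex_eq_iff)
qed
lemma z7: "zeta16^7 = Complex (-al) be"
proof -
  have "zeta16^7 = zeta16^4 * zeta16^3" by (simp flip: power_add)
  also have "... = \<i> * Complex be al" by (metis z3 z4)
  finally show ?thesis by (simp add: complex_eq_iff)
qed
lemma z8: "zeta16^8 = -1"
proof -
  have "zeta16^8 = zeta16^4 * zeta16^4" by (simp flip: power_add)
  then show ?thesis by (simp add: z4)
qed


lemma sqrt2_irr: "sqrt 2 \<notin> \<rat>"
proof
  assume "sqrt 2 \<in> \<rat>"
  then obtain m n :: nat where n: "n \<noteq> 0" and sq: "\<bar>sqrt 2\<bar> = m / n" and cop: "coprime m n"
    by (rule Rats_abs_nat_div_natE)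
  have "real m = sqrt 2 * n" using n sq by simp
  then have "real (m^2) = 2 * real (n^2)" by (simp add: power_mult_distrib)
  then have eq: "m^2 = 2 * n^2" by linarith
  then have "even (m^2)" by simp
  then have "even m" by simp
  then obtain k where "m = 2 * k" by blast
  with eq have "n^2 = 2 * k^2" by simp
  then have "even (n^2)" by simp
  then have "even n" by simp
  with \<open>even m\<close> cop show False by fastforce
qed

lemma no_rat_half: fixes v :: real assumes "v \<in> \<rat>" shows "v * v \<noteq> 1/2"
proof
  assume h: "v * v = 1/2"
  have "(2*\<bar>v\<bar>)^2 = 2" using h by (simp add: power2_eq_square abs_mult_self_eq algebra_simps)
  then have "sqrt 2 = 2*\<bar>v\<bar>" by (metis abs_ge_zero mult_nonneg_nonneg real_sqrt_unique zero_le_numeral)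
  moreover have "2*\<bar>v\<bar> \<in> \<rat>" using assms by simp
  ultimately show False using sqrt2_irr by simp
qed

lemma rt_irr: "rt \<notin> \<rat>" using no_rat_half rt_sq by blast

lemma lin1:
  fixes a b :: real
  assumes "a \<in> \<rat>" "b \<in> \<rat>" "a + b * rt = 0"
  shows "a = 0 \<and> b = 0"
proof (cases "b = 0")
  case True then show ?thesis using assms by simp
next
  case False
  then have "rt = - a / b" using assms(3) by (simp add: field_simps)
  then have "rt \<in> \<rat>" using assms by (metis Rats_divide Rats_minus_iff)
  then show ?thesis using rt_irr by simp
qed

lemma Q4:
  assumes r: "x \<in> \<rat>" "y \<in> \<rat>" "z \<in> \<rat>" "w \<in> \<rat>"
    and eq: "x + y * al + z * rt + w * be = 0"
  shows "x = 0 \<and> y = 0 \<and> z = 0 \<and> w = 0"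
proof -
  define c where "c = y/2"
  define d where "d = (y+w)/2"
  have cd: "c \<in> \<rat>" "d \<in> \<rat>" using r by (simp_all add: c_def d_def)
  have E: "(x + z * rt) * al = - (c + d * rt)"
  proof -
    have "(x + z * rt) * al = (x + y * al + z * rt + w * be) * al - y * (al * al) - w * (al * be)"
      by (simp add: algebra_simps)
    also have "... = - y * (al * al) - w * (al * be)" using eq by simp
    also have "... = - y * ((1 + rt)/2) - w * (rt/2)" by (simp only: al_sq ab_prod)
    also have "... = - (c + d * rt)" by (simp add: c_def d_def field_simps)
    finally show ?thesis .
  qed
  show ?thesis
  proof (cases "x = 0 \<and> z = 0")
    case True
    then have "c + d * rt = 0" using E by simp
    then have "c = 0 \<and> d = 0" using lin1 cd by blast
    then show ?thesis using True by (simp add: c_def d_def)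
  next
    case False
    define N where "N = x*x - z*z/2"
    have NQ: "N \<in> \<rat>" using r by (simp add: N_def)
    have N0: "N \<noteq> 0"
    proof
      assume "N = 0"
      show False
      proof (cases "z = 0")
        case True then show False using \<open>N = 0\<close> False by (simp add: N_def)
      next
        case False
        have "(x/z) * (x/z) = 1/2" using \<open>N = 0\<close> False by (simp add: N_def field_simps)
        moreover have "x/z \<in> \<rat>" using r by simp
        ultimately show False using no_rat_half by blast
      qed
    qed
    have "N * al = (x - z * rt) * ((x + z * rt) * al)" using rt_sq by (simp add: N_def algebra_simps)
    also have "... = - (c*x - d*z/2) - (d*x - c*z) * rt" unfolding E using rt_sq by (simp add: algebra_simps)
    finally have "N * al = - (c*x - d*z/2) - (d*x - c*z) * rt" .
    then have alN: "N * al = - (c*x - d*z/2) - (d*x - c*z) * rt" .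
    define p where "p = - (c*x - d*z/2) / N"
    define q where "q = - (d*x - c*z) / N"
    have "al = (N * al) / N" using N0 by simp
    also have "... = (- (c*x - d*z/2) - (d*x - c*z) * rt) / N" using alN by simp
    also have "... = p + q * rt" unfolding p_def q_def using N0 by (simp add: field_simps)
    finally have "al = p + q * rt" .
    moreover have "p \<in> \<rat>" "q \<in> \<rat>" unfolding p_def q_def using NQ cd r by simp_all
    ultimately have pq: "p \<in> \<rat>" "q \<in> \<rat>" "al = p + q * rt" by auto
    have "(p*p + q*q/2 - 1/2) + (2*p*q - 1/2) * rt = 0"
    proof -
      have "al * al = p*p + q*q*(rt*rt) + 2*p*q*rt" unfolding pq(3) by (simp add: algebra_simps)
      then show ?thesis using al_sq rt_sq by (simp add: algebra_simps)
    qed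
    moreover have "p*p + q*q/2 - 1/2 \<in> \<rat>" "2*p*q - 1/2 \<in> \<rat>" using pq by simp_all
    ultimately have h: "p*p + q*q/2 - 1/2 = 0 \<and> 2*p*q - 1/2 = 0" using lin1 by blast
    then have h: "p*p + q*q/2 - 1/2 = 0" "2*p*q - 1/2 = 0" by auto
    have "(4*p*p - 1) * (4*p*p - 1) = 16*(p*p)*(p*p) - 8*(p*p) + 1" by (simp add: algebra_simps)
    also have "16*(p*p)*(p*p) = 16*(p*p)*(1/2 - q*q/2)" using h(1) by simp
    finally have "(4*p*p - 1) * (4*p*p - 1) = 1 - 8 * (p*q)*(p*q)" by (simp add: algebra_simps)
    also have "p * q = 1/4" using h(2) by simp
    finally have "(4*p*p - 1) * (4*p*p - 1) = 1/2" by simp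
    moreover have "4*p*p - 1 \<in> \<rat>" using pq by simp
    ultimately show ?thesis using no_rat_half by blast
  qed
qed


definition ev :: "int \<Rightarrow> int \<Rightarrow> int \<Rightarrow> int \<Rightarrow> int \<Rightarrow> int \<Rightarrow> int \<Rightarrow> int \<Rightarrow> complex" where
  "ev a0 a1 a2 a3 a4 a5 a6 a7 = of_int a0 + of_int a1 * zeta16 + of_int a2 * zeta16^2
     + of_int a3 * zeta16^3 + of_int a4 * zeta16^4 + of_int a5 * zeta16^5
     + of_int a6 * zeta16^6 + of_int a7 * zeta16^7"

definition Zs :: "complex set" where
  "Zs = {w. \<exists>a0 a1 a2 a3 a4 a5 a6 a7. w = ev a0 a1 a2 a3 a4 a5 a6 a7}"

lemma ZsI: "ev a0 a1 a2 a3 a4 a5 a6 a7 \<in> Zs" unfolding Zs_def by blast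

lemma ZsE: assumes "w \<in> Zs" obtains a0 a1 a2 a3 a4 a5 a6 a7 where "w = ev a0 a1 a2 a3 a4 a5 a6 a7"
  using assms unfolding Zs_def by blast

lemma Zs_add: "x \<in> Zs \<Longrightarrow> y \<in> Zs \<Longrightarrow> x + y \<in> Zs"
proof -
  assume "x \<in> Zs" "y \<in> Zs"
  then obtain a0 a1 a2 a3 a4 a5 a6 a7 b0 b1 b2 b3 b4 b5 b6 b7 where
    "x = ev a0 a1 a2 a3 a4 a5 a6 a7" "y = ev b0 b1 b2 b3 b4 b5 b6 b7" by (metis ZsE)
  then have "x + y = ev (a0+b0) (a1+b1) (a2+b2) (a3+b3) (a4+b4) (a5+b5) (a6+b6) (a7+b7)"
    by (simp add: ev_def algebra_simps)
  then show ?thesis using ZsI by simp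
qed

lemma Zs_intmult: "x \<in> Zs \<Longrightarrow> of_int n * x \<in> Zs"
proof -
  assume "x \<in> Zs"
  then obtain a0 a1 a2 a3 a4 a5 a6 a7 where
    "x = ev a0 a1 a2 a3 a4 a5 a6 a7" by (metis ZsE)
  then have "of_int n * x = ev (n*a0) (n*a1) (n*a2) (n*a3) (n*a4) (n*a5) (n*a6) (n*a7)"
    by (simp add: ev_def algebra_simps)
  then show ?thesis using ZsI by simp
qed

lemma Zs_int: "of_int n \<in> Zs"
proof -
  have "of_int n = ev n 0 0 0 0 0 0 0" by (simp add: ev_def)
  then show ?thesis using ZsI by simp
qed

lemma Zs_0: "0 \<in> Zs" using Zs_int[of 0] by simp
lemma Zs_1: "1 \<in> Zs" using Zs_int[of 1] by simp
lemma Zs_numeral: "numeral k \<in> Zs" using Zs_int[of "numeral k"] by simp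

lemma Zs_uminus: "x \<in> Zs \<Longrightarrow> - x \<in> Zs" using Zs_intmult[of x "-1"] by simp
lemma Zs_diff: "x \<in> Zs \<Longrightarrow> y \<in> Zs \<Longrightarrow> x - y \<in> Zs"
  using Zs_add[of x "-y"] Zs_uminus by simp

lemma Zs_zeta: "zeta16 \<in> Zs"
proof -
  have "zeta16 = ev 0 1 0 0 0 0 0 0" by (simp add: ev_def)
  then show ?thesis by (metis ZsI)
qed

lemma Zs_zmult: "x \<in> Zs \<Longrightarrow> zeta16 * x \<in> Zs"
proof -
  assume "x \<in> Zs"
  then obtain a0 a1 a2 a3 a4 a5 a6 a7 where
    "x = ev a0 a1 a2 a3 a4 a5 a6 a7" by (metis ZsE)
  moreover have "zeta16 * ev a0 a1 a2 a3 a4 a5 a6 a7 = ev (-a7) a0 a1 a2 a3 a4 a5 a6"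
  proof -
    have "zeta16 * ev a0 a1 a2 a3 a4 a5 a6 a7 = ev (-a7) a0 a1 a2 a3 a4 a5 a6 + of_int a7 * (zeta16^8 + 1)"
      by (simp add: ev_def algebra_simps eval_nat_numeral)
    then show ?thesis using z8 by simp
  qed
  ultimately show ?thesis using ZsI by simp
qed

lemma Zs_powmult: "x \<in> Zs \<Longrightarrow> zeta16^n * x \<in> Zs"
proof (induction n)
  case 0 then show ?case by simp
next
  case (Suc n)
  then have "zeta16 * (zeta16^n * x) \<in> Zs" using Zs_zmult by blast
  then show ?case by (simp add: mult.assoc)
qed

lemma Zs_mult: "x \<in> Zs \<Longrightarrow> y \<in> Zs \<Longrightarrow> x * y \<in> Zs"
proof -
  assume "x \<in> Zs" "y \<in> Zs"
  then obtain a0 a1 a2 a3 a4 a5 a6 a7 where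
    x: "x = ev a0 a1 a2 a3 a4 a5 a6 a7" by (metis ZsE)
  have eq: "x * y = of_int a0 * (zeta16^0 * y) + of_int a1 * (zeta16^1 * y) + of_int a2 * (zeta16^2 * y)
     + of_int a3 * (zeta16^3 * y) + of_int a4 * (zeta16^4 * y) + of_int a5 * (zeta16^5 * y)
     + of_int a6 * (zeta16^6 * y) + of_int a7 * (zeta16^7 * y)"
    unfolding x ev_def by (simp add: algebra_simps)
  show ?thesis unfolding eq by (intro Zs_add Zs_intmult Zs_powmult[OF \<open>y \<in> Zs\<close>])
qed

lemma Zs_pow: "x \<in> Zs \<Longrightarrow> x ^ n \<in> Zs"
  by (induction n) (auto simp: Zs_1 Zs_mult)

lemma cnj_zeta: "cnj zeta16 = -(zeta16 ^ 7)"
  by (simp only: z7) (simp add: z1 complex_eq_iff)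

lemma Zs_cnj: "x \<in> Zs \<Longrightarrow> cnj x \<in> Zs"
proof -
  assume "x \<in> Zs"
  then obtain a0 a1 a2 a3 a4 a5 a6 a7 where
    x: "x = ev a0 a1 a2 a3 a4 a5 a6 a7" by (metis ZsE)
  let ?c = "cnj zeta16"
  have c: "?c \<in> Zs" unfolding cnj_zeta by (intro Zs_uminus Zs_pow Zs_zeta)
  have "cnj x = of_int a0 + of_int a1 * ?c + of_int a2 * ?c^2 + of_int a3 * ?c^3 + of_int a4 * ?c^4
     + of_int a5 * ?c^5 + of_int a6 * ?c^6 + of_int a7 * ?c^7"
    unfolding x ev_def by simp
  then show ?thesis using c by (simp add: Zs_add Zs_intmult Zs_pow Zs_int del: power.simps)
qed

lemma Re_ev: "Re (ev a0 a1 a2 a3 a4 a5 a6 a7) =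
   of_int a0 + of_int (a1 - a7) * al + of_int (a2 - a6) * rt + of_int (a3 - a5) * be"
  unfolding ev_def z2 z3 z4 z5 z6 z7 by (simp add: z1 algebra_simps)

lemma Im_ev: "Im (ev a0 a1 a2 a3 a4 a5 a6 a7) =
   of_int a4 + of_int (a3 + a5) * al + of_int (a2 + a6) * rt + of_int (a1 + a7) * be"
  unfolding ev_def z2 z3 z4 z5 z6 z7 by (simp add: z1 algebra_simps)

lemma half_notin: "1/2 \<notin> Zs"
proof
  assume "1/2 \<in> Zs"
  then obtain a0 a1 a2 a3 a4 a5 a6 a7 where
    x: "1/2 = ev a0 a1 a2 a3 a4 a5 a6 a7" by (metis ZsE)
  have "Re (ev a0 a1 a2 a3 a4 a5 a6 a7) = Re (1/2)" by (metis x)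
  then have "Re (ev a0 a1 a2 a3 a4 a5 a6 a7) = 1/2" by simp
  then have "(of_int a0 - 1/2) + of_int (a1 - a7) * al + of_int (a2 - a6) * rt + of_int (a3 - a5) * be = 0"
    unfolding Re_ev by linarith
  then have "of_int a0 - 1/2 = (0::real)" using Q4 by (meson Rats_diff Rats_of_int Rats_divide Rats_number_of Rats_1)
  then have "2 * of_int a0 = (1::real)" by simp
  then have "2 * a0 = 1" by linarith
  then show False by presburger
qed


definition pz :: complex where "pz = 1 - zeta16"
definition EE :: complex where "EE = ev 0 (-4) 14 (-28) 35 (-28) 14 (-4)"
definition FF :: complex where "FF = ev 0 (-356) (-658) (-860) (-931) (-860) (-658) (-356)"

lemma pz_Zs: "pz \<in> Zs" unfolding pz_def by (intro Zs_diff Zs_1 Zs_zeta)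
lemma EE_Zs: "EE \<in> Zs" unfolding EE_def by (rule ZsI)
lemma FF_Zs: "FF \<in> Zs" unfolding FF_def by (rule ZsI)

lemma pz_nz: "pz \<noteq> 0"
  unfolding pz_def using be_pos by (simp add: z1 complex_eq_iff)

lemma pz8: "pz^8 = 2 * EE"
proof -
  have "pz^8 = 2 * EE + (zeta16^8 + 1)"
    unfolding pz_def EE_def ev_def by (simp add: algebra_simps eval_nat_numeral)
  then show ?thesis using z8 by simp
qed

lemma EF: "EE * FF = 1"
proof -
  have "EE * FF = 1 + (zeta16^8 + 1) * (-1 + 1424*zeta16^2 - 2352*zeta16^3 + 4196*zeta16^4 - 2352*zeta16^5 + 1424*zeta16^6)"
    unfolding EE_def FF_def ev_def by (simp add: algebra_simps eval_nat_numeral)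
  then show ?thesis using z8 by simp
qed

lemma two_pz: "2 = pz^8 * FF" using pz8 EF by (simp add: mult.assoc)

definition dvz :: "complex \<Rightarrow> complex \<Rightarrow> bool" where "dvz x y \<longleftrightarrow> (\<exists>c\<in>Zs. y = x * c)"

lemma P1: assumes "w \<in> Zs" shows "\<exists>n::int. \<exists>c\<in>Zs. w = of_int n + pz * c"
proof -
  obtain a0 a1 a2 a3 a4 a5 a6 a7 where x: "w = ev a0 a1 a2 a3 a4 a5 a6 a7" using assms by (metis ZsE)
  have "w = of_int (a0+a1+a2+a3+a4+a5+a6+a7) + pz * ev (-(a1+a2+a3+a4+a5+a6+a7)) (-(a2+a3+a4+a5+a6+a7))
     (-(a3+a4+a5+a6+a7)) (-(a4+a5+a6+a7)) (-(a5+a6+a7)) (-(a6+a7)) (-a7) 0"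
    unfolding x pz_def ev_def by (simp add: algebra_simps eval_nat_numeral)
  then show ?thesis using ZsI by blast
qed

lemma even_pz: "dvz pz (of_int (2*m))"
proof -
  have "of_int (2*m) = pz * (pz^7 * FF * of_int m)"
    using two_pz by (simp add: algebra_simps eval_nat_numeral)
  moreover have "pz^7 * FF * of_int m \<in> Zs" using pz_Zs FF_Zs by (intro Zs_mult Zs_pow Zs_int)
  ultimately show ?thesis unfolding dvz_def by blast
qed

lemma P1': assumes "w \<in> Zs" shows "dvz pz w \<or> dvz pz (w - 1)"
proof -
  obtain n c where c: "c \<in> Zs" "w = of_int n + pz * c" using P1[OF assms] by blast
  show ?thesis
  proof (cases "even n")
    case True
    then obtain m where "n = 2*m" by blast
    then obtain d where d: "d \<in> Zs" "of_int n = pz * d" using even_pz unfolding dvz_def by blast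
    have "w = pz * (d + c)" using c d by (simp add: algebra_simps)
    then show ?thesis using Zs_add c d unfolding dvz_def by blast
  next
    case False
    then obtain m where "n - 1 = 2*m" by (metis odd_two_times_div_two_succ add_diff_cancel_right')
    then obtain d where d: "d \<in> Zs" "of_int (n - 1) = pz * d" using even_pz unfolding dvz_def by metis
    have "w - 1 = pz * (d + c)" using c d by (simp add: algebra_simps)
    then show ?thesis using Zs_add c d unfolding dvz_def by blast
  qed
qed

lemma not_dvz1: "\<not> dvz pz 1"
proof
  assume "dvz pz 1"
  then obtain c where c: "c \<in> Zs" "1 = pz * c" unfolding dvz_def by blast
  then have "1 = (pz * c)^8" by simp
  also have "... = 2 * (EE * c^8)" using pz8 by (simp add: power_mult_distrib)
  finally have h: "1 = 2 * (EE * c^8)" .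
  have "1/2 = EE * c^8" by (subst h) simp
  moreover have "EE * c^8 \<in> Zs" using EE_Zs c by (intro Zs_mult Zs_pow)
  ultimately show False using half_notin by metis
qed

lemma pz_prime:
  assumes "x \<in> Zs" "y \<in> Zs" "dvz pz (x * y)"
  shows "dvz pz x \<or> dvz pz y"
proof (rule ccontr)
  assume "\<not> ?thesis"
  then have "dvz pz (x - 1)" "dvz pz (y - 1)" using P1' assms by blast+
  then obtain c d where cd: "c \<in> Zs" "d \<in> Zs" "x - 1 = pz * c" "y - 1 = pz * d" unfolding dvz_def by blast
  obtain e where e: "e \<in> Zs" "x * y = pz * e" using assms(3) unfolding dvz_def by blast
  have "x = 1 + pz * c" "y = 1 + pz * d" using cd by (simp_all add: algebra_simps)
  then have "1 = pz * (e - c - d - pz * c * d)" using e(2) by (simp add: algebra_simps)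
  moreover have "e - c - d - pz * c * d \<in> Zs" using cd e pz_Zs by (intro Zs_diff Zs_mult)
  ultimately show False using not_dvz1 unfolding dvz_def by blast
qed

lemma cnj_pz: "cnj pz = pz * zeta16^7"
proof -
  have "pz * zeta16^7 = zeta16^7 - zeta16^8" unfolding pz_def by (simp add: algebra_simps flip: power_Suc)
  then show ?thesis unfolding pz_def using cnj_zeta z8 by simp
qed

lemma descent: "w \<in> Zs \<Longrightarrow> dvz (pz^(2*n)) (w * cnj w) \<Longrightarrow> dvz (pz^n) w"
proof (induction n arbitrary: w)
  case 0
  then show ?case unfolding dvz_def by auto
next
  case (Suc n)
  have cw: "cnj w \<in> Zs" using Suc.prems Zs_cnj by blast
  obtain c where c: "c \<in> Zs" "w * cnj w = pz^(2*Suc n) * c" using Suc.prems unfolding dvz_def by blast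
  have "dvz pz (w * cnj w)" unfolding dvz_def using c pz_Zs
    by (intro bexI[of _ "pz^(2*n+1) * c"]) (auto simp: algebra_simps intro!: Zs_mult Zs_pow)
  then have "dvz pz w \<or> dvz pz (cnj w)" using pz_prime Suc.prems cw by blast
  then have "dvz pz w"
  proof
    assume "dvz pz (cnj w)"
    then obtain d where d: "d \<in> Zs" "cnj w = pz * d" unfolding dvz_def by blast
    then have "w = cnj pz * cnj d" by (metis complex_cnj_cnj complex_cnj_mult)
    then have "w = pz * (zeta16^7 * cnj d)" using cnj_pz by simp
    moreover have "zeta16^7 * cnj d \<in> Zs" using d by (intro Zs_powmult Zs_cnj)
    ultimately show ?thesis unfolding dvz_def by blast
  qed
  then obtain w1 where w1: "w1 \<in> Zs" "w = pz * w1" unfolding dvz_def by blast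
  have "pz * pz * (zeta16^7 * (w1 * cnj w1)) = pz * pz * (pz^(2*n) * c)"
    using c(2) unfolding w1(2) by (simp add: cnj_pz algebra_simps)
  then have h: "zeta16^7 * (w1 * cnj w1) = pz^(2*n) * c" using pz_nz by simp
  have "w1 * cnj w1 = - zeta16 * (zeta16^7 * (w1 * cnj w1))" using z8 by (simp add: algebra_simps flip: power_Suc)
  also have "... = pz^(2*n) * (- zeta16 * c)" using h by simp
  finally have "dvz (pz^(2*n)) (w1 * cnj w1)" unfolding dvz_def using c Zs_zeta
    by (intro bexI[of _ "- zeta16 * c"]) (auto intro: Zs_mult Zs_uminus)
  then have "dvz (pz^n) w1" using Suc.IH w1 by blast
  then show ?case using w1 unfolding dvz_def by (auto simp: algebra_simps)
qed


lemma sqexp: "(x0 + xA*al + xB*rt + xC*be)^2 = (x0^2 + (xA^2+xB^2+xC^2)/2) + (2*x0*xA + xA*xB + xB*xC)*al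
   + (xA^2/2 - xC^2/2 + 2*x0*xB + xA*xC)*rt + (2*x0*xC + xA*xB - xB*xC)*be"
proof -
  have "(x0 + xA*al + xB*rt + xC*be)^2 = ((x0^2 + (xA^2+xB^2+xC^2)/2) + (2*x0*xA + xA*xB + xB*xC)*al
   + (xA^2/2 - xC^2/2 + 2*x0*xB + xA*xC)*rt + (2*x0*xC + xA*xB - xB*xC)*be)
   + xA^2*(al*al - (1+rt)/2) + xB^2*(rt*rt - 1/2) + xC^2*(be*be - (1-rt)/2)
   + 2*xA*xB*(al*rt - (al+be)/2) + 2*xA*xC*(al*be - rt/2) + 2*xB*xC*(be*rt - (al-be)/2)"
    by (simp add: algebra_simps power2_eq_square add_divide_distrib diff_divide_distrib)
  also have "... = (x0^2 + (xA^2+xB^2+xC^2)/2) + (2*x0*xA + xA*xB + xB*xC)*al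
   + (xA^2/2 - xC^2/2 + 2*x0*xB + xA*xC)*rt + (2*x0*xC + xA*xB - xB*xC)*be"
    by (simp only: al_sq rt_sq be_sq al_rt ab_prod be_rt) (simp add: field_simps)
  finally show ?thesis .
qed

lemma gen:
  assumes r: "x0 \<in> \<rat>" "xA \<in> \<rat>" "xB \<in> \<rat>" "xC \<in> \<rat>" "y0 \<in> \<rat>" "yA \<in> \<rat>" "yB \<in> \<rat>" "yC \<in> \<rat>"
    and e: "(x0 + xA*al + xB*rt + xC*be)^2 + (y0 + yA*al + yB*rt + yC*be)^2 = 1"
  shows "x0^2 + (xA^2+xB^2+xC^2)/2 + y0^2 + (yA^2+yB^2+yC^2)/2 = 1"
proof -
  let ?c = "x0^2 + (xA^2+xB^2+xC^2)/2 + y0^2 + (yA^2+yB^2+yC^2)/2 - 1"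
  let ?p = "(2*x0*xA + xA*xB + xB*xC) + (2*y0*yA + yA*yB + yB*yC)"
  let ?q = "(xA^2/2 - xC^2/2 + 2*x0*xB + xA*xC) + (yA^2/2 - yC^2/2 + 2*y0*yB + yA*yC)"
  let ?s = "(2*x0*xC + xA*xB - xB*xC) + (2*y0*yC + yA*yB - yB*yC)"
  have "?c + ?p * al + ?q * rt + ?s * be = 0"
    using e unfolding sqexp by (simp add: algebra_simps)
  moreover have "?c \<in> \<rat>" "?p \<in> \<rat>" "?q \<in> \<rat>" "?s \<in> \<rat>" using r by simp_all
  ultimately have "?c = 0" using Q4 by blast
  then show ?thesis by simp
qed

lemma unit_sumsq:
  assumes "norm (ev a0 a1 a2 a3 a4 a5 a6 a7) = 1"
  shows "a0^2 + a1^2 + a2^2 + a3^2 + a4^2 + a5^2 + a6^2 + a7^2 = 1"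
proof -
  let ?u = "ev a0 a1 a2 a3 a4 a5 a6 a7"
  have "(Re ?u)^2 + (Im ?u)^2 = 1" using assms cmod_power2[of ?u] by simp
  then have "(of_int a0 + of_int (a1 - a7) * al + of_int (a2 - a6) * rt + of_int (a3 - a5) * be)^2
     + (of_int a4 + of_int (a3 + a5) * al + of_int (a2 + a6) * rt + of_int (a1 + a7) * be)^2 = (1::real)"
    unfolding Re_ev Im_ev .
  then have "(of_int a0)^2 + ((of_int (a1 - a7))^2 + (of_int (a2 - a6))^2 + (of_int (a3 - a5))^2)/2
      + (of_int a4)^2 + ((of_int (a3 + a5))^2 + (of_int (a2 + a6))^2 + (of_int (a1 + a7))^2)/2 = (1::real)"
    by (intro gen) simp_all
  then have "real_of_int (a0^2 + a1^2 + a2^2 + a3^2 + a4^2 + a5^2 + a6^2 + a7^2) = 1"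
    by (simp add: algebra_simps power2_eq_square add_divide_distrib diff_divide_distrib)
  then show ?thesis by linarith
qed

lemma sq1: "(x::int) \<noteq> 0 \<Longrightarrow> x^2 \<ge> 1"
  by (smt (verit, best) int_one_le_iff_zero_less power2_less_eq_zero_iff zero_le_power2 zero_less_power2 power_one_right one_le_power abs_le_square_iff abs_ge_zero)

lemma fin:
  assumes s: "a0^2 + a1^2 + a2^2 + a3^2 + a4^2 + a5^2 + a6^2 + a7^2 = 1"
  shows "\<exists>l::nat. l \<le> 15 \<and> ev a0 a1 a2 a3 a4 a5 a6 a7 = zeta16 ^ l"
proof -
  have sq0: "a0^2 \<ge> 0" "a1^2 \<ge> 0" "a2^2 \<ge> 0" "a3^2 \<ge> 0" "a4^2 \<ge> 0" "a5^2 \<ge> 0" "a6^2 \<ge> 0" "a7^2 \<ge> 0" by simp_all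
  have "a0 \<noteq> 0 \<or> a1 \<noteq> 0 \<or> a2 \<noteq> 0 \<or> a3 \<noteq> 0 \<or> a4 \<noteq> 0 \<or> a5 \<noteq> 0 \<or> a6 \<noteq> 0 \<or> a7 \<noteq> 0" using s by (metis add.right_neutral power_zero_numeral zero_neq_one)
  moreover have "a0 \<noteq> 0 \<Longrightarrow> ?thesis"
  proof -
    assume nz: "a0 \<noteq> 0"
    then have "a0^2 \<ge> 1" using sq1 by blast
    then have z2: "a1^2 = 0" "a2^2 = 0" "a3^2 = 0" "a4^2 = 0" "a5^2 = 0" "a6^2 = 0" "a7^2 = 0" using sq0 s by linarith+
    then have z: "a1 = 0" "a2 = 0" "a3 = 0" "a4 = 0" "a5 = 0" "a6 = 0" "a7 = 0" by simp_all
    then have "a0^2 = 1" using s by simp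
    then have "a0 = 1 \<or> a0 = -1" by (simp add: power2_eq_1_iff)
    then show ?thesis
    proof
      assume "a0 = 1"
      then have "ev a0 a1 a2 a3 a4 a5 a6 a7 = zeta16^0" using z by (simp add: ev_def)
      then show ?thesis by (intro exI[of _ 0]) simp
    next
      assume "a0 = -1"
      then have "ev a0 a1 a2 a3 a4 a5 a6 a7 = - (zeta16^0)" using z by (simp add: ev_def)
      also have "... = zeta16^0 * zeta16^8" using z8 by simp
      also have "... = zeta16^(0+8)" by (rule power_add[symmetric])
      finally show ?thesis by (intro exI[of _ "0+8"]) simp
    qed
  qed
  moreover have "a1 \<noteq> 0 \<Longrightarrow> ?thesis"
  proof -
    assume nz: "a1 \<noteq> 0"
    then have "a1^2 \<ge> 1" using sq1 by blast
    then have z2: "a0^2 = 0" "a2^2 = 0" "a3^2 = 0" "a4^2 = 0" "a5^2 = 0" "a6^2 = 0" "a7^2 = 0" using sq0 s by linarith+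
    then have z: "a0 = 0" "a2 = 0" "a3 = 0" "a4 = 0" "a5 = 0" "a6 = 0" "a7 = 0" by simp_all
    then have "a1^2 = 1" using s by simp
    then have "a1 = 1 \<or> a1 = -1" by (simp add: power2_eq_1_iff)
    then show ?thesis
    proof
      assume "a1 = 1"
      then have "ev a0 a1 a2 a3 a4 a5 a6 a7 = zeta16^1" using z by (simp add: ev_def)
      then show ?thesis by (intro exI[of _ 1]) simp
    next
      assume "a1 = -1"
      then have "ev a0 a1 a2 a3 a4 a5 a6 a7 = - (zeta16^1)" using z by (simp add: ev_def)
      also have "... = zeta16^1 * zeta16^8" using z8 by simp
      also have "... = zeta16^(1+8)" by (rule power_add[symmetric])
      finally show ?thesis by (intro exI[of _ "1+8"]) simp
    qed
  qed
  moreover have "a2 \<noteq> 0 \<Longrightarrow> ?thesis"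
  proof -
    assume nz: "a2 \<noteq> 0"
    then have "a2^2 \<ge> 1" using sq1 by blast
    then have z2: "a0^2 = 0" "a1^2 = 0" "a3^2 = 0" "a4^2 = 0" "a5^2 = 0" "a6^2 = 0" "a7^2 = 0" using sq0 s by linarith+
    then have z: "a0 = 0" "a1 = 0" "a3 = 0" "a4 = 0" "a5 = 0" "a6 = 0" "a7 = 0" by simp_all
    then have "a2^2 = 1" using s by simp
    then have "a2 = 1 \<or> a2 = -1" by (simp add: power2_eq_1_iff)
    then show ?thesis
    proof
      assume "a2 = 1"
      then have "ev a0 a1 a2 a3 a4 a5 a6 a7 = zeta16^2" using z by (simp add: ev_def)
      then show ?thesis by (intro exI[of _ 2]) simp
    next
      assume "a2 = -1"
      then have "ev a0 a1 a2 a3 a4 a5 a6 a7 = - (zeta16^2)" using z by (simp add: ev_def)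
      also have "... = zeta16^2 * zeta16^8" using z8 by simp
      also have "... = zeta16^(2+8)" by (rule power_add[symmetric])
      finally show ?thesis by (intro exI[of _ "2+8"]) simp
    qed
  qed
  moreover have "a3 \<noteq> 0 \<Longrightarrow> ?thesis"
  proof -
    assume nz: "a3 \<noteq> 0"
    then have "a3^2 \<ge> 1" using sq1 by blast
    then have z2: "a0^2 = 0" "a1^2 = 0" "a2^2 = 0" "a4^2 = 0" "a5^2 = 0" "a6^2 = 0" "a7^2 = 0" using sq0 s by linarith+
    then have z: "a0 = 0" "a1 = 0" "a2 = 0" "a4 = 0" "a5 = 0" "a6 = 0" "a7 = 0" by simp_all
    then have "a3^2 = 1" using s by simp
    then have "a3 = 1 \<or> a3 = -1" by (simp add: power2_eq_1_iff)
    then show ?thesis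
    proof
      assume "a3 = 1"
      then have "ev a0 a1 a2 a3 a4 a5 a6 a7 = zeta16^3" using z by (simp add: ev_def)
      then show ?thesis by (intro exI[of _ 3]) simp
    next
      assume "a3 = -1"
      then have "ev a0 a1 a2 a3 a4 a5 a6 a7 = - (zeta16^3)" using z by (simp add: ev_def)
      also have "... = zeta16^3 * zeta16^8" using z8 by simp
      also have "... = zeta16^(3+8)" by (rule power_add[symmetric])
      finally show ?thesis by (intro exI[of _ "3+8"]) simp
    qed
  qed
  moreover have "a4 \<noteq> 0 \<Longrightarrow> ?thesis"
  proof -
    assume nz: "a4 \<noteq> 0"
    then have "a4^2 \<ge> 1" using sq1 by blast
    then have z2: "a0^2 = 0" "a1^2 = 0" "a2^2 = 0" "a3^2 = 0" "a5^2 = 0" "a6^2 = 0" "a7^2 = 0" using sq0 s by linarith+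
    then have z: "a0 = 0" "a1 = 0" "a2 = 0" "a3 = 0" "a5 = 0" "a6 = 0" "a7 = 0" by simp_all
    then have "a4^2 = 1" using s by simp
    then have "a4 = 1 \<or> a4 = -1" by (simp add: power2_eq_1_iff)
    then show ?thesis
    proof
      assume "a4 = 1"
      then have "ev a0 a1 a2 a3 a4 a5 a6 a7 = zeta16^4" using z by (simp add: ev_def)
      then show ?thesis by (intro exI[of _ 4]) simp
    next
      assume "a4 = -1"
      then have "ev a0 a1 a2 a3 a4 a5 a6 a7 = - (zeta16^4)" using z by (simp add: ev_def)
      also have "... = zeta16^4 * zeta16^8" using z8 by simp
      also have "... = zeta16^(4+8)" by (rule power_add[symmetric])
      finally show ?thesis by (intro exI[of _ "4+8"]) simp
    qed
  qed
  moreover have "a5 \<noteq> 0 \<Longrightarrow> ?thesis"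
  proof -
    assume nz: "a5 \<noteq> 0"
    then have "a5^2 \<ge> 1" using sq1 by blast
    then have z2: "a0^2 = 0" "a1^2 = 0" "a2^2 = 0" "a3^2 = 0" "a4^2 = 0" "a6^2 = 0" "a7^2 = 0" using sq0 s by linarith+
    then have z: "a0 = 0" "a1 = 0" "a2 = 0" "a3 = 0" "a4 = 0" "a6 = 0" "a7 = 0" by simp_all
    then have "a5^2 = 1" using s by simp
    then have "a5 = 1 \<or> a5 = -1" by (simp add: power2_eq_1_iff)
    then show ?thesis
    proof
      assume "a5 = 1"
      then have "ev a0 a1 a2 a3 a4 a5 a6 a7 = zeta16^5" using z by (simp add: ev_def)
      then show ?thesis by (intro exI[of _ 5]) simp
    next
      assume "a5 = -1"
      then have "ev a0 a1 a2 a3 a4 a5 a6 a7 = - (zeta16^5)" using z by (simp add: ev_def)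
      also have "... = zeta16^5 * zeta16^8" using z8 by simp
      also have "... = zeta16^(5+8)" by (rule power_add[symmetric])
      finally show ?thesis by (intro exI[of _ "5+8"]) simp
    qed
  qed
  moreover have "a6 \<noteq> 0 \<Longrightarrow> ?thesis"
  proof -
    assume nz: "a6 \<noteq> 0"
    then have "a6^2 \<ge> 1" using sq1 by blast
    then have z2: "a0^2 = 0" "a1^2 = 0" "a2^2 = 0" "a3^2 = 0" "a4^2 = 0" "a5^2 = 0" "a7^2 = 0" using sq0 s by linarith+
    then have z: "a0 = 0" "a1 = 0" "a2 = 0" "a3 = 0" "a4 = 0" "a5 = 0" "a7 = 0" by simp_all
    then have "a6^2 = 1" using s by simp
    then have "a6 = 1 \<or> a6 = -1" by (simp add: power2_eq_1_iff)
    then show ?thesis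
    proof
      assume "a6 = 1"
      then have "ev a0 a1 a2 a3 a4 a5 a6 a7 = zeta16^6" using z by (simp add: ev_def)
      then show ?thesis by (intro exI[of _ 6]) simp
    next
      assume "a6 = -1"
      then have "ev a0 a1 a2 a3 a4 a5 a6 a7 = - (zeta16^6)" using z by (simp add: ev_def)
      also have "... = zeta16^6 * zeta16^8" using z8 by simp
      also have "... = zeta16^(6+8)" by (rule power_add[symmetric])
      finally show ?thesis by (intro exI[of _ "6+8"]) simp
    qed
  qed
  moreover have "a7 \<noteq> 0 \<Longrightarrow> ?thesis"
  proof -
    assume nz: "a7 \<noteq> 0"
    then have "a7^2 \<ge> 1" using sq1 by blast
    then have z2: "a0^2 = 0" "a1^2 = 0" "a2^2 = 0" "a3^2 = 0" "a4^2 = 0" "a5^2 = 0" "a6^2 = 0" using sq0 s by linarith+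
    then have z: "a0 = 0" "a1 = 0" "a2 = 0" "a3 = 0" "a4 = 0" "a5 = 0" "a6 = 0" by simp_all
    then have "a7^2 = 1" using s by simp
    then have "a7 = 1 \<or> a7 = -1" by (simp add: power2_eq_1_iff)
    then show ?thesis
    proof
      assume "a7 = 1"
      then have "ev a0 a1 a2 a3 a4 a5 a6 a7 = zeta16^7" using z by (simp add: ev_def)
      then show ?thesis by (intro exI[of _ 7]) simp
    next
      assume "a7 = -1"
      then have "ev a0 a1 a2 a3 a4 a5 a6 a7 = - (zeta16^7)" using z by (simp add: ev_def)
      also have "... = zeta16^7 * zeta16^8" using z8 by simp
      also have "... = zeta16^(7+8)" by (rule power_add[symmetric])
      finally show ?thesis by (intro exI[of _ "7+8"]) simp
    qed
  qed
  ultimately show ?thesis by blast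
qed

lemma red: "w \<in> Zs \<Longrightarrow> w * cnj w = 4^k \<Longrightarrow> w / 2^k \<in> Zs"
proof (induction k arbitrary: w)
  case 0 then show ?case by simp
next
  case (Suc k)
  have "w * cnj w = pz^(2*8) * (FF^2 * 4^k)"
  proof -
    have "(4::complex) = (pz^8 * FF)^2" using two_pz by (metis numeral_Bit0 power2_eq_square mult_2 one_add_one numeral_One)
    then show ?thesis using Suc.prems(2) by (simp add: power_mult_distrib power_mult algebra_simps)
  qed
  moreover have "FF^2 * 4^k \<in> Zs" using FF_Zs by (intro Zs_mult Zs_pow Zs_numeral)
  ultimately have "dvz (pz^(2*8)) (w * cnj w)" unfolding dvz_def by blast
  then have "dvz (pz^8) w" using descent Suc.prems(1) by blast
  then obtain c where c: "c \<in> Zs" "w = pz^8 * c" unfolding dvz_def by blast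
  define w' where "w' = EE * c"
  have w: "w = 2 * w'" unfolding w'_def using c pz8 by simp
  have "w' \<in> Zs" unfolding w'_def using c EE_Zs by (intro Zs_mult)
  moreover have "w' * cnj w' = 4^k"
  proof -
    have "4 * (w' * cnj w') = 4 * 4^k" using Suc.prems(2) unfolding w by (simp add: algebra_simps)
    then show ?thesis by simp
  qed
  ultimately have "w' / 2^k \<in> Zs" using Suc.IH by blast
  moreover have "w / 2^Suc k = w' / 2^k" unfolding w by simp
  ultimately show ?case by simp
qed

definition TT :: "complex set" where "TT = {x. \<exists>w\<in>Zs. \<exists>k::nat. x = w / 2^k}"

lemma two_pow_Zs: "(2::complex)^k \<in> Zs" by (intro Zs_pow Zs_numeral)

lemma TT_sub: "is_subring_C TT"
  unfolding is_subring_C_def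
proof (intro conjI ballI)
  show "1 \<in> TT" unfolding TT_def using Zs_1 by (intro CollectI bexI[of _ 1] exI[of _ 0]) auto
next
  fix x y assume "x \<in> TT" "y \<in> TT"
  then obtain w1 k1 w2 k2 where h: "w1 \<in> Zs" "x = w1 / 2^k1" "w2 \<in> Zs" "y = w2 / 2^k2" unfolding TT_def by blast
  have "x + y = (w1 * 2^k2 + w2 * 2^k1) / 2^(k1+k2)" unfolding h(2) h(4) by (simp add: field_simps power_add)
  moreover have "w1 * 2^k2 + w2 * 2^k1 \<in> Zs" using h two_pow_Zs by (intro Zs_add Zs_mult)
  ultimately show "x + y \<in> TT" unfolding TT_def by blast
  have "x - y = (w1 * 2^k2 - w2 * 2^k1) / 2^(k1+k2)" unfolding h(2) h(4) by (simp add: field_simps power_add)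
  moreover have "w1 * 2^k2 - w2 * 2^k1 \<in> Zs" using h two_pow_Zs by (intro Zs_diff Zs_mult)
  ultimately show "x - y \<in> TT" unfolding TT_def by blast
  have "x * y = (w1 * w2) / 2^(k1+k2)" unfolding h(2) h(4) by (simp add: power_add)
  moreover have "w1 * w2 \<in> Zs" using h by (intro Zs_mult)
  ultimately show "x * y \<in> TT" unfolding TT_def by blast
qed

lemma R16_TT: "R16 \<subseteq> TT"
proof -
  have "1/2 \<in> TT" unfolding TT_def using Zs_1 by (intro CollectI bexI[of _ 1] exI[of _ 1]) auto
  moreover have "zeta16 \<in> TT" unfolding TT_def using Zs_zeta by (intro CollectI bexI[of _ zeta16] exI[of _ 0]) auto
  ultimately show ?thesis unfolding R16_def using TT_sub by blast
qed

theorem lemma6p2: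
  fixes u :: complex
  assumes "u \<in> R16" and "norm u = 1"
  shows "\<exists>l::nat. l \<le> 15 \<and> u = zeta16 ^ l"
proof -
  obtain w k where wk: "w \<in> Zs" "u = w / 2^k" using assms(1) R16_TT unfolding TT_def by blast
  have uu: "u * cnj u = 1" using assms(2) complex_norm_square[of u] by simp
  have "w = 2^k * u" using wk by simp
  then have "w * cnj w = 4^k" using uu by (simp add: algebra_simps power_mult_distrib[symmetric])
  then have "u \<in> Zs" using red wk by simp
  then obtain a0 a1 a2 a3 a4 a5 a6 a7 where x: "u = ev a0 a1 a2 a3 a4 a5 a6 a7" by (metis ZsE)
  then have "a0^2 + a1^2 + a2^2 + a3^2 + a4^2 + a5^2 + a6^2 + a7^2 = 1" using unit_sumsq assms(2) by blast
  then show ?thesis using fin x by blast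
qed

end
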